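(* Let $\nu$ be a Krull valuation on $\mathbb{K}[x]$, $\mu$ a valuation on $\overline{\mathbb{K}}[x]$ extending $\nu$, $Q$ a key polynomial for $\nu$ of degree $n$, and $a$ an optimizing root of $Q$. Assume $\nu(Q)\in\mu\overline{\mathbb{K}}$, let $e$ be the least positive integer with $e\nu(Q)\in\mu\mathbb{K}(a)$, let $h\in\mathbb{K}[x]$ with $\deg h<n$ and $\nu(h)=e\nu(Q)$, and put $r=Q^e/h$. If $g=t_0+t_1r+\dots+t_sr^s$ with $t_i\in\mathbb{K}[x]$ and $\deg t_i<ne$ whenever $t_i\ne0$, then $\mu_{x-a}(g)=\nu_Q(g)$. In particular $\mu_{x-a}$ and $\nu_Q$ coincide on $\mathbb{K}(r)$.
   Context: $\overline{\mathbb{K}}$ is an algebraic closure of $\mathbb{K}$; $\mu\overline{\mathbb{K}}$, $\mu\mathbb{K}(a)$ denote value groups of $\mu$ on $\overline{\mathbb{K}}$, $\mathbb{K}(a)$. Truncations: $\nu_Q(f)=\min_i\nu(f_iQ^i)$ for the $Q$-expansion $f=\sum f_iQ^i$ ($\deg f_i<\deg Q$), and $\mu_{x-a}(\sum_i c_i(x-a)^i)=\min_i\{\mu(c_i)+i\mu(x-a)\}$; both are valuations, extended to the fields of rational functions. Optimizing root: a root $c$ of $Q$ maximizing $\mu(x-c)$. Key polynomials: for nonzero $f\in\mathbb{K}[x]$, with Hasse derivatives $\partial_bf=\sum_{i\ge b}\binom{i}{b}a_ix^{i-b}$ for $f=\sum a_ix^i$, $\epsilon(f)=\max_{1\le b\le\deg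 f}(\nu(f)-\nu(\partial_bf))/b$ if $\deg f>0$ and $\epsilon(f)=-\infty$ if $f$ is constant; a monic $Q$ is a key polynomial for $\nu$ if $\epsilon(f)\ge\epsilon(Q)$ implies $\deg f\ge\deg Q$ for all $f$. *)

theory Defs
  imports "HOL-Computational_Algebra.Polynomial" "HOL-Computational_Algebra.Fraction_Field"
begin

definition nmul :: "nat \<Rightarrow> 'g::ab_group_add \<Rightarrow> 'g" where
  "nmul n x = (\<Sum>i<n. x)"

(* Krull valuation with trivial support: values of nonzero elements in an ordered
   abelian group; the value of 0 is the formal \<infinity> and is never used. *)
definition valuation :: "('a::idom \<Rightarrow> 'g::linordered_ab_group_add) \<Rightarrow> bool" where
  "valuation v \<longleftrightarrow>
     (\<forall>x y. x \<noteq> 0 \<longrightarrow> y \<noteq> 0 \<longrightarrow> v (x * y) = v x + v y) \<and>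
     (\<forall>x y. x \<noteq> 0 \<longrightarrow> y \<noteq> 0 \<longrightarrow> x + y \<noteq> 0 \<longrightarrow> min (v x) (v y) \<le> v (x + y))"

definition is_alg_closure :: "('k::field \<Rightarrow> 'c::field) \<Rightarrow> bool" where
  "is_alg_closure emb \<longleftrightarrow>
     inj emb \<and> emb 0 = 0 \<and> emb 1 = 1 \<and>
     (\<forall>a b. emb (a + b) = emb a + emb b) \<and> (\<forall>a b. emb (a * b) = emb a * emb b) \<and>
     (\<forall>p :: 'c poly. degree p > 0 \<longrightarrow> (\<exists>z. poly p z = 0)) \<and>
     (\<forall>z. \<exists>p :: 'k poly. p \<noteq> 0 \<and> poly (map_poly emb p) z = 0)"

definition hasse :: "nat \<Rightarrow> 'a::comm_ring_1 poly \<Rightarrow> 'a poly" where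
  "hasse b f = (\<Sum>i\<le>degree f. if b \<le> i then monom (of_nat (i choose b) * coeff f i) (i - b) else 0)"

(* The finite (i.e. not -\<infinity>) terms (\<nu>(f)-\<nu>(\<partial>_b f))/b, 1\<le>b\<le>deg f, of \<epsilon>(f),
   represented as pairs (numerator, denominator b); terms with \<partial>_b f = 0 equal -\<infinity>. *)
definition eps_terms :: "('a::field poly \<Rightarrow> 'g::linordered_ab_group_add) \<Rightarrow> 'a poly \<Rightarrow> ('g \<times> nat) set" where
  "eps_terms \<nu> f = {(\<nu> f - \<nu> (hasse b f), b) | b. 1 \<le> b \<and> b \<le> degree f \<and> hasse b f \<noteq> 0}"

(* \<epsilon>(f) \<ge> \<epsilon>(Q): max over the terms, comparing x/b \<ge> y/c as c*x \<ge> b*y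
   (\<epsilon> = -\<infinity> when there is no finite term, in particular for constants) *)
definition eps_ge :: "('a::field poly \<Rightarrow> 'g::linordered_ab_group_add) \<Rightarrow> 'a poly \<Rightarrow> 'a poly \<Rightarrow> bool" where
  "eps_ge \<nu> f Q \<longleftrightarrow> eps_terms \<nu> Q = {} \<or>
     (\<exists>(x, b) \<in> eps_terms \<nu> f. \<forall>(y, c) \<in> eps_terms \<nu> Q. nmul b y \<le> nmul c x)"

definition key_poly :: "('a::field poly \<Rightarrow> 'g::linordered_ab_group_add) \<Rightarrow> 'a poly \<Rightarrow> bool" where
  "key_poly \<nu> Q \<longleftrightarrow> lead_coeff Q = 1 \<and>
     (\<forall>f. f \<noteq> 0 \<longrightarrow> eps_ge \<nu> f Q \<longrightarrow> degree Q \<le> degree f)"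

(* i-th coefficient of the Q-expansion f = \<Sum> f_i Q^i, deg f_i < deg Q *)
definition qexp :: "'a::field poly \<Rightarrow> 'a poly \<Rightarrow> nat \<Rightarrow> 'a poly" where
  "qexp Q f i = (f div Q ^ i) mod Q"

definition trunc_Q :: "('a::field poly \<Rightarrow> 'g::linordered_ab_group_add) \<Rightarrow> 'a poly \<Rightarrow> 'a poly \<Rightarrow> 'g" where
  "trunc_Q \<nu> Q f = Min {\<nu> (qexp Q f i * Q ^ i) | i. i \<le> degree f \<and> qexp Q f i \<noteq> 0}"

(* truncation \<mu>_{x-a}(\<Sum> c_i (x-a)^i) = min_i (\<mu>(c_i) + i \<mu>(x-a)), for F \<noteq> 0 *)
definition trunc_lin :: "('c::field poly \<Rightarrow> 'g::linordered_ab_group_add) \<Rightarrow> 'c \<Rightarrow> 'c poly \<Rightarrow> 'g" where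
  "trunc_lin \<mu> a F = Min {\<mu> [:coeff (pcompose F [:a, 1:]) i:] + nmul i (\<mu> [:- a, 1:]) | i.
        i \<le> degree F \<and> coeff (pcompose F [:a, 1:]) i \<noteq> 0}"

(* extension of a valuation w on K[x] to K(x) = fraction field: w(f/d) = w f - w d for any
   representation f/d with d \<noteq> 0 (well defined since w is multiplicative); None represents \<infinity> *)
definition ext_frac :: "('a::field poly \<Rightarrow> 'g::linordered_ab_group_add) \<Rightarrow> 'a poly fract \<Rightarrow> 'g option" where
  "ext_frac w q = (if q = 0 then None
      else (let (f, d) = (SOME (f, d). d \<noteq> 0 \<and> q = Fract f d) in Some (w f - w d)))"

definition vgroup_closure :: "('c::field poly \<Rightarrow> 'g::linordered_ab_group_add) \<Rightarrow> 'g set" where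
  "vgroup_closure \<mu> = {\<mu> [:z:] | z. z \<noteq> 0}"

(* value group \<mu>K(a) of \<mu> on K(a) = K[a] = {p(a) | p \<in> K[x]} *)
definition vgroup_Ka :: "('k::field \<Rightarrow> 'c::field) \<Rightarrow> ('c poly \<Rightarrow> 'g::linordered_ab_group_add) \<Rightarrow> 'c \<Rightarrow> 'g set" where
  "vgroup_Ka emb \<mu> a = {\<mu> [:poly (map_poly emb p) a:] | p. poly (map_poly emb p) a \<noteq> 0}"

definition optimizing_root :: "('k::field \<Rightarrow> 'c::field) \<Rightarrow> ('c poly \<Rightarrow> 'g::linordered_ab_group_add) \<Rightarrow> 'k poly \<Rightarrow> 'c \<Rightarrow> bool" where
  "optimizing_root emb \<mu> Q a \<longleftrightarrow> poly (map_poly emb Q) a = 0 \<and>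
     (\<forall>c. poly (map_poly emb Q) c = 0 \<longrightarrow> \<mu> [:- c, 1:] \<le> \<mu> [:- a, 1:])"

end

theory Submission
  imports Defs
begin


lemma nmul_0[simp]: "nmul 0 x = 0" by (simp add: nmul_def)
lemma nmul_Suc: "nmul (Suc n) x = x + nmul n x" by (simp add: nmul_def add.commute)
lemma nmul_1[simp]: "nmul 1 x = x" by (simp add: nmul_def)
lemma nmul_Suc0[simp]: "nmul (Suc 0) x = x" by (simp add: nmul_def)
lemma nmul_addn: "nmul (m + n) x = nmul m x + nmul n x"
  by (induction m) (auto simp: nmul_Suc add.assoc)
lemma nmul_add: "nmul n (x + y) = nmul n x + nmul n y"
  by (induction n) (auto simp: nmul_Suc algebra_simps)
lemma nmul_zero[simp]: "nmul n (0::'a::ab_group_add) = 0"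
  by (simp add: nmul_def)
lemma nmul_minus: "nmul n (- x) = - nmul n x"
  by (induction n) (auto simp: nmul_Suc algebra_simps)
lemma nmul_diff: "nmul n (x - y) = nmul n x - nmul n y"
  using nmul_add[of n x "-y"] nmul_minus[of n y] by simp
lemma nmul_mult: "nmul m (nmul n x) = nmul (m * n) x"
  by (induction m) (auto simp: nmul_Suc nmul_addn)
lemma nmul_comm: "nmul m (nmul n x) = nmul n (nmul m x)"
  by (simp add: nmul_mult mult.commute)
lemma nmul_mono: "(x::'a::linordered_ab_group_add) \<le> y \<Longrightarrow> nmul n x \<le> nmul n y"
  by (induction n) (auto simp: nmul_Suc add_mono)
lemma nmul_strict_mono: "(x::'a::linordered_ab_group_add) < y \<Longrightarrow> 0 < n \<Longrightarrow> nmul n x < nmul n y"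
  by (induction n) (auto simp: nmul_Suc add_less_le_mono nmul_mono)
lemma nmul_mono_n: "(0::'a::linordered_ab_group_add) \<le> x \<Longrightarrow> m \<le> n \<Longrightarrow> nmul m x \<le> nmul n x"
proof -
  assume a: "0 \<le> x" "m \<le> n"
  then obtain k where "n = m + k" using le_Suc_ex by blast
  moreover have "0 \<le> nmul k x" using nmul_mono[OF a(1), of k] by simp
  ultimately show ?thesis by (simp add: nmul_addn)
qed

locale val =
  fixes v :: "'a::idom \<Rightarrow> 'g::linordered_ab_group_add"
  assumes valv: "valuation v"
begin

lemma mult: "x \<noteq> 0 \<Longrightarrow> y \<noteq> 0 \<Longrightarrow> v (x * y) = v x + v y"
  using valv unfolding valuation_def by blast
lemma addm: "x \<noteq> 0 \<Longrightarrow> y \<noteq> 0 \<Longrightarrow> x + y \<noteq> 0 \<Longrightarrow> min (v x) (v y) \<le> v (x + y)"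
  using valv unfolding valuation_def by blast
lemma one[simp]: "v 1 = 0"
  using mult[of 1 1] by simp
lemma mone[simp]: "v (-1) = 0"
proof -
  have "v (-1) + v (-1) = 0" using mult[of "-1" "-1"] by simp
  then show ?thesis
  proof (cases rule: linorder_cases[of "v (-1)" 0])
    case less then have "v (-1) + v (-1) < 0" by (simp add: add_neg_neg)
    then show ?thesis using \<open>v (-1) + v (-1) = 0\<close> by simp
  next
    case greater then have "v (-1) + v (-1) > 0" by (simp add: add_pos_pos)
    then show ?thesis using \<open>v (-1) + v (-1) = 0\<close> by simp
  qed
qed
lemma uminus[simp]: "v (- x) = v x"
proof (cases "x = 0")
  case False
  then show ?thesis using mult[of "-1" x] by simp
qed simp
lemma strict: assumes "x \<noteq> 0" "y \<noteq> 0" "v x < v y"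
  shows "x + y \<noteq> 0 \<and> v (x + y) = v x"
proof -
  have nz: "x + y \<noteq> 0"
  proof
    assume "x + y = 0" then have "y = - x" by (simp add: eq_neg_iff_add_eq_0 add.commute)
    then show False using assms by simp
  qed
  have 1: "min (v x) (v y) \<le> v (x + y)" using addm[OF assms(1,2) nz] .
  have "min (v (x + y)) (v (-y)) \<le> v ((x + y) + (- y))" using addm[OF nz, of "-y"] assms by simp
  then have "min (v (x + y)) (v y) \<le> v x" by simp
  then have "v (x + y) \<le> v x" using assms(3) by (metis min_def not_le order_less_imp_le)
  moreover have "v x \<le> v (x + y)" using 1 assms(3) by simp
  ultimately show ?thesis using nz by simp
qed

definition LB :: "'g \<Rightarrow> 'a \<Rightarrow> bool" where "LB w x \<longleftrightarrow> x = 0 \<or> w \<le> v x"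
definition SLB :: "'g \<Rightarrow> 'a \<Rightarrow> bool" where "SLB w x \<longleftrightarrow> x = 0 \<or> w < v x"

lemma LB_0[simp]: "LB w 0" by (simp add: LB_def)
lemma SLB_0[simp]: "SLB w 0" by (simp add: SLB_def)
lemma LB_add: "LB w x \<Longrightarrow> LB w y \<Longrightarrow> LB w (x + y)"
proof -
  assume a: "LB w x" "LB w y"
  show ?thesis
  proof (cases "x = 0 \<or> y = 0 \<or> x + y = 0")
    case True then show ?thesis using a by (auto simp: LB_def)
  next
    case False
    then have "min (v x) (v y) \<le> v (x + y)" using addm by blast
    then show ?thesis using a False unfolding LB_def by (simp add: min_le_iff_disj) (meson order_trans)
  qed
qed
lemma SLB_add: "SLB w x \<Longrightarrow> SLB w y \<Longrightarrow> SLB w (x + y)"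
proof -
  assume a: "SLB w x" "SLB w y"
  show ?thesis
  proof (cases "x = 0 \<or> y = 0 \<or> x + y = 0")
    case True then show ?thesis using a by (auto simp: SLB_def)
  next
    case False
    then have "min (v x) (v y) \<le> v (x + y)" using addm by blast
    then show ?thesis using a False unfolding SLB_def by (simp add: min_le_iff_disj) (meson order_less_le_trans)
  qed
qed
lemma LB_sum: "finite S \<Longrightarrow> (\<And>i. i \<in> S \<Longrightarrow> LB w (f i)) \<Longrightarrow> LB w (sum f S)"
  by (induction S rule: finite_induct) (auto intro: LB_add)
lemma SLB_sum: "finite S \<Longrightarrow> (\<And>i. i \<in> S \<Longrightarrow> SLB w (f i)) \<Longrightarrow> SLB w (sum f S)"
  by (induction S rule: finite_induct) (auto intro: SLB_add)
lemma exact_SLB: "x \<noteq> 0 \<Longrightarrow> SLB (v x) y \<Longrightarrow> x + y \<noteq> 0 \<and> v (x + y) = v x"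
  unfolding SLB_def using strict[of x y] by (cases "y = 0") auto
lemma LB_mult: "LB w x \<Longrightarrow> y \<noteq> 0 \<Longrightarrow> LB (w + v y) (x * y)"
  unfolding LB_def by (cases "x = 0") (auto simp: mult add_right_mono)
lemma SLB_mult: "SLB w x \<Longrightarrow> y \<noteq> 0 \<Longrightarrow> SLB (w + v y) (x * y)"
  unfolding SLB_def by (cases "x = 0") (auto simp: mult add_strict_right_mono)
lemma LB_mono: "LB w x \<Longrightarrow> w' \<le> w \<Longrightarrow> LB w' x" unfolding LB_def by auto
lemma SLB_mono: "SLB w x \<Longrightarrow> w' \<le> w \<Longrightarrow> SLB w' x" unfolding SLB_def by auto
lemma LB_SLB: "LB w x \<Longrightarrow> w' < w \<Longrightarrow> SLB w' x" unfolding LB_def SLB_def by auto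

lemma prod_list: "0 \<notin> set xs \<Longrightarrow> v (prod_list xs) = sum_list (map v xs)"
  by (induction xs) (auto simp: mult prod_list_zero_iff)
lemma power: "x \<noteq> 0 \<Longrightarrow> v (x ^ n) = nmul n (v x)"
  by (induction n) (auto simp: mult nmul_Suc)

end




locale gauss = val v for v :: "'c::field \<Rightarrow> 'g::linordered_ab_group_add" +
  fixes \<gamma> :: 'g
begin

definition cv :: "'c poly \<Rightarrow> nat \<Rightarrow> 'g" where "cv P i = v (coeff P i) + nmul i \<gamma>"
definition domi :: "'g \<Rightarrow> nat \<Rightarrow> 'c poly \<Rightarrow> bool" where
  "domi w t P \<longleftrightarrow> (\<forall>i. coeff P i \<noteq> 0 \<longrightarrow> w \<le> cv P i \<and> (t \<le> i \<longrightarrow> w < cv P i))"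
definition VT :: "'c poly \<Rightarrow> 'g \<Rightarrow> nat \<Rightarrow> bool" where
  "VT P w t \<longleftrightarrow> coeff P t \<noteq> 0 \<and> cv P t = w \<and>
     (\<forall>i. coeff P i \<noteq> 0 \<longrightarrow> w \<le> cv P i \<and> (t < i \<longrightarrow> w < cv P i))"

lemma LB_cv: "LB (w - nmul i \<gamma>) (coeff P i) \<longleftrightarrow> (coeff P i \<noteq> 0 \<longrightarrow> w \<le> cv P i)"
  unfolding LB_def cv_def by (auto simp: algebra_simps le_diff_eq)
lemma SLB_cv: "SLB (w - nmul i \<gamma>) (coeff P i) \<longleftrightarrow> (coeff P i \<noteq> 0 \<longrightarrow> w < cv P i)"
  unfolding SLB_def cv_def by (auto simp: algebra_simps less_diff_eq)

lemma domi_0[simp]: "domi w t 0" by (simp add: domi_def)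

lemma domi_add: assumes "domi w t P" "domi w t R" shows "domi w t (P + R)"
  unfolding domi_def
proof (intro allI impI)
  fix i assume nz: "coeff (P + R) i \<noteq> 0"
  have a: "LB (w - nmul i \<gamma>) (coeff P i)" "LB (w - nmul i \<gamma>) (coeff R i)"
    using assms unfolding domi_def by (auto simp: LB_cv)
  have "LB (w - nmul i \<gamma>) (coeff (P + R) i)" using LB_add[OF a] by simp
  then have 1: "w \<le> cv (P + R) i" using nz LB_cv by blast
  have "t \<le> i \<longrightarrow> w < cv (P + R) i"
  proof
    assume "t \<le> i"
    then have b: "SLB (w - nmul i \<gamma>) (coeff P i)" "SLB (w - nmul i \<gamma>) (coeff R i)"
      using assms unfolding domi_def by (auto simp: SLB_cv)
    have "SLB (w - nmul i \<gamma>) (coeff (P + R) i)" using SLB_add[OF b] by simp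
    then show "w < cv (P + R) i" using nz SLB_cv by blast
  qed
  with 1 show "w \<le> cv (P + R) i \<and> (t \<le> i \<longrightarrow> w < cv (P + R) i)" by blast
qed

lemma domi_sum: "finite S \<Longrightarrow> (\<And>i. i \<in> S \<Longrightarrow> domi w t (f i)) \<Longrightarrow> domi w t (sum f S)"
  by (induction S rule: finite_induct) (auto intro: domi_add)

lemma VT_domi: assumes "VT P w' t'" "w < w' \<or> (w' = w \<and> t' < t)" shows "domi w t P"
  using assms unfolding VT_def domi_def by (auto intro: order_less_le_trans)

lemma VT_add_domi: assumes "VT P w t" "domi w t R" shows "VT (P + R) w t"
proof -
  have ct: "coeff P t \<noteq> 0" "cv P t = w" using assms(1) VT_def by auto
  have "SLB (w - nmul t \<gamma>) (coeff R t)" using assms(2) unfolding domi_def by (auto simp: SLB_cv)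
  moreover have "v (coeff P t) = w - nmul t \<gamma>" using ct by (simp add: cv_def algebra_simps)
  ultimately have e: "coeff P t + coeff R t \<noteq> 0 \<and> v (coeff P t + coeff R t) = w - nmul t \<gamma>"
    using exact_SLB[OF ct(1)] by simp
  then have 1: "coeff (P + R) t \<noteq> 0" "cv (P + R) t = w" by (auto simp: cv_def)
  have "domi w (Suc t) P" using assms(1) unfolding VT_def domi_def by auto
  moreover have "domi w (Suc t) R" using assms(2) unfolding domi_def by auto
  ultimately have "domi w (Suc t) (P + R)" by (rule domi_add)
  then show ?thesis using 1 unfolding VT_def domi_def by auto
qed

lemma VT_const: "c \<noteq> 0 \<Longrightarrow> VT [:c:] (v c) 0"
  unfolding VT_def cv_def by (auto simp: coeff_pCons split: nat.splits)

lemma VT_min: assumes "VT P w t" shows "Min {cv P i | i. i \<le> degree P \<and> coeff P i \<noteq> 0} = w"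
proof (rule Min_eqI)
  show "finite {cv P i | i. i \<le> degree P \<and> coeff P i \<noteq> 0}" by simp
  show "w \<in> {cv P i | i. i \<le> degree P \<and> coeff P i \<noteq> 0}" using assms unfolding VT_def
    using le_degree by blast
  fix y assume "y \<in> {cv P i | i. i \<le> degree P \<and> coeff P i \<noteq> 0}"
  then show "w \<le> y" using assms unfolding VT_def by auto
qed

lemma term_LB:
  assumes "coeff P i \<noteq> 0 \<longrightarrow> w \<le> cv P i" "coeff R j \<noteq> 0 \<longrightarrow> u \<le> cv R j" "k = i + j"
  shows "LB (w + u - nmul k \<gamma>) (coeff P i * coeff R j)"
proof (cases "coeff P i = 0 \<or> coeff R j = 0")
  case False
  then have "w + u \<le> cv P i + cv R j" using assms by (auto intro: add_mono)
  then show ?thesis using False assms(3)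
    by (simp add: LB_def mult cv_def nmul_addn algebra_simps le_diff_eq)
qed auto

lemma term_SLB:
  assumes "coeff P i \<noteq> 0 \<longrightarrow> w \<le> cv P i" "coeff R j \<noteq> 0 \<longrightarrow> u \<le> cv R j" "k = i + j"
    and "(coeff P i \<noteq> 0 \<longrightarrow> w < cv P i) \<or> (coeff R j \<noteq> 0 \<longrightarrow> u < cv R j)"
  shows "SLB (w + u - nmul k \<gamma>) (coeff P i * coeff R j)"
proof (cases "coeff P i = 0 \<or> coeff R j = 0")
  case False
  then have "w + u < cv P i + cv R j" using assms by (auto intro: add_less_le_mono add_le_less_mono)
  then show ?thesis using False assms(3)
    by (simp add: SLB_def mult cv_def nmul_addn algebra_simps less_diff_eq)
qed auto

lemma VT_mult: assumes P: "VT P w t" and R: "VT R u s" shows "VT (P * R) (w + u) (t + s)"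
proof -
  have Pi: "\<And>i. coeff P i \<noteq> 0 \<longrightarrow> w \<le> cv P i" and Ri: "\<And>j. coeff R j \<noteq> 0 \<longrightarrow> u \<le> cv R j"
    using P R unfolding VT_def by auto
  have Ps: "\<And>i. t < i \<Longrightarrow> coeff P i \<noteq> 0 \<longrightarrow> w < cv P i" and Rs: "\<And>j. s < j \<Longrightarrow> coeff R j \<noteq> 0 \<longrightarrow> u < cv R j"
    using P R unfolding VT_def by auto
  have LBk: "LB (w + u - nmul k \<gamma>) (coeff (P * R) k)" for k
    unfolding coeff_mult by (rule LB_sum) (auto intro!: term_LB Pi Ri)
  have SLBk: "SLB (w + u - nmul k \<gamma>) (coeff (P * R) k)" if "t + s < k" for k
    unfolding coeff_mult
  proof (rule SLB_sum)
    fix i assume "i \<in> {..k}"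
    then have "t < i \<or> s < k - i" using that by auto
    then show "SLB (w + u - nmul k \<gamma>) (coeff P i * coeff R (k - i))"
      using \<open>i \<in> {..k}\<close> by (intro term_SLB Pi Ri) (auto dest: Ps Rs)
  qed simp
  define k where "k = t + s"
  have split: "coeff (P * R) k = coeff P t * coeff R s + (\<Sum>i\<in>{..k} - {t}. coeff P i * coeff R (k - i))"
    unfolding coeff_mult by (subst sum.remove[of _ t]) (auto simp: k_def)
  have rest: "SLB (w + u - nmul k \<gamma>) (\<Sum>i\<in>{..k} - {t}. coeff P i * coeff R (k - i))"
  proof (rule SLB_sum)
    fix i assume "i \<in> {..k} - {t}"
    then have "t < i \<or> s < k - i" by (auto simp: k_def)
    then show "SLB (w + u - nmul k \<gamma>) (coeff P i * coeff R (k - i))"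
      using \<open>i \<in> {..k} - {t}\<close> by (intro term_SLB Pi Ri) (auto dest: Ps Rs)
  qed simp
  have nz: "coeff P t * coeff R s \<noteq> 0" using P R VT_def by auto
  have vv: "v (coeff P t * coeff R s) = w + u - nmul k \<gamma>"
    using P R unfolding VT_def cv_def k_def by (auto simp: mult nmul_addn algebra_simps)
  have e: "coeff (P * R) k \<noteq> 0 \<and> v (coeff (P * R) k) = w + u - nmul k \<gamma>"
    using exact_SLB[OF nz] rest vv split by simp
  show ?thesis unfolding VT_def
  proof (intro conjI allI impI)
    show "coeff (P * R) (t + s) \<noteq> 0" using e k_def by simp
    show "cv (P * R) (t + s) = w + u" using e k_def by (simp add: cv_def)
  next
    fix i assume "coeff (P * R) i \<noteq> 0"
    then show "w + u \<le> cv (P * R) i" using LBk[of i] LB_cv by blast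
  next
    fix i assume "coeff (P * R) i \<noteq> 0" "t + s < i"
    then show "w + u < cv (P * R) i" using SLBk[of i] SLB_cv by blast
  qed
qed

end




lemma coeff_hasse: "coeff (hasse b F) k = of_nat ((k + b) choose b) * coeff F (k + b)"
proof -
  have "coeff (hasse b F) k = (\<Sum>i\<le>degree F. if i = k + b then of_nat (i choose b) * coeff F i else 0)"
    unfolding hasse_def coeff_sum by (intro sum.cong) (auto simp: coeff_monom)
  also have "\<dots> = (if k + b \<in> {..degree F} then of_nat ((k + b) choose b) * coeff F (k + b) else 0)"
    by (rule sum.delta[OF finite_atMost])
  also have "\<dots> = of_nat ((k + b) choose b) * coeff F (k + b)"
    by (auto simp: coeff_eq_0)
  finally show ?thesis .
qed

lemma hasse_0[simp]: "hasse 0 F = F"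
  by (simp add: poly_eq_iff coeff_hasse)

lemma hasse_gt: "degree F < b \<Longrightarrow> hasse b F = 0"
  by (simp add: poly_eq_iff coeff_hasse coeff_eq_0)

lemma hasse_nz_le: "hasse b F \<noteq> 0 \<Longrightarrow> b \<le> degree F"
  using hasse_gt by (meson not_le)

lemma hasse_smult: "hasse b (smult c F) = smult c (hasse b F)"
  by (simp add: poly_eq_iff coeff_hasse algebra_simps)

lemma coeff_mult_lin: "coeff ((P :: 'a::comm_ring_1 poly) * [:-c, 1:]) k = - c * coeff P k + (if k = 0 then 0 else coeff P (k - 1))"
proof -
  have "P * [:-c, 1:] = smult (-c) P + pCons 0 P" by (simp add: mult_pCons_right)
  then show ?thesis by (cases k) (auto simp: coeff_pCons)
qed

lemma hasse_lin: "hasse (Suc b) ((F :: 'a::comm_ring_1 poly) * [:-c, 1:]) = hasse (Suc b) F * [:-c, 1:] + hasse b F"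
proof (rule poly_eqI)
  fix k
  show "coeff (hasse (Suc b) (F * [:-c, 1:])) k = coeff (hasse (Suc b) F * [:-c, 1:] + hasse b F) k"
  proof (cases k)
    case 0
    then show ?thesis by (simp add: coeff_hasse coeff_mult_lin algebra_simps)
  next
    case (Suc k')
    have bin: "Suc (Suc (k' + b)) choose Suc b = (Suc (k' + b) choose b) + (Suc (k' + b) choose Suc b)"
      by simp
    show ?thesis using Suc
      by (simp add: coeff_hasse coeff_mult_lin bin algebra_simps)
  qed
qed

lemma of_nat_hom:
  assumes "emb 0 = 0" "emb 1 = 1" "\<forall>a b. emb (a + b) = emb a + emb b"
  shows "emb (of_nat m) = of_nat m"
  by (induction m) (auto simp: assms)

lemma hasse_map:
  assumes "emb 0 = 0" "emb 1 = 1" "\<forall>a b. emb (a + b) = emb a + emb b" "\<forall>a b. emb (a * b) = emb a * emb b"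
  shows "hasse b (map_poly emb F) = map_poly emb (hasse b F)"
  by (simp add: poly_eq_iff coeff_hasse coeff_map_poly assms of_nat_hom[OF assms(1-3)])

locale pval = val v for v :: "'c::field poly \<Rightarrow> 'g::linordered_ab_group_add"
begin

lemma hasse_roots:
  assumes "lc \<noteq> 0" "\<forall>b\<in>set rs. v [:-b, 1:] \<le> D"
  defines "F \<equiv> smult lc (prod_list (map (\<lambda>b. [:-b, 1:]) rs))"
  defines "k \<equiv> length (filter (\<lambda>b. v [:-b, 1:] = D) rs)"
  shows "(\<forall>j. LB (v F - nmul j D) (hasse j F)) \<and> hasse k F \<noteq> 0 \<and> v (hasse k F) = v F - nmul k D
         \<and> (\<forall>j>k. SLB (v F - nmul j D) (hasse j F))"
  using assms(2) unfolding F_def k_def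
proof (induction rs)
  case Nil
  have "hasse j [:lc:] = 0" if "j > 0" for j using hasse_gt[of "[:lc:]" j] that by simp
  then have "LB (v [:lc:] - nmul j D) (hasse j [:lc:])" for j by (cases j) (auto simp: LB_def)
  then show ?case using assms(1) \<open>\<And>j. j > 0 \<Longrightarrow> hasse j [:lc:] = 0\<close> by auto
next
  case (Cons c rs)
  define G where "G = smult lc (prod_list (map (\<lambda>b. [:-b, 1:]) rs))"
  define L where "L = ([:-c, 1:] :: 'c poly)"
  define m where "m = length (filter (\<lambda>b. v [:-b, 1:] = D) rs)"
  have IH: "(\<forall>j. LB (v G - nmul j D) (hasse j G)) \<and> hasse m G \<noteq> 0 \<and> v (hasse m G) = v G - nmul m D
         \<and> (\<forall>j>m. SLB (v G - nmul j D) (hasse j G))"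
    using Cons unfolding G_def m_def by auto
  have Lnz: "L \<noteq> 0" by (simp add: L_def)
  have Gnz: "G \<noteq> 0" using assms(1) by (auto simp: G_def prod_list_zero_iff)
  have LD: "v L \<le> D" using Cons.prems by (simp add: L_def)
  have F': "smult lc (prod_list (map (\<lambda>b. [:-b, 1:]) (c # rs))) = G * L"
    unfolding G_def L_def by (simp only: list.map prod_list.Cons mult_smult_left mult.commute[of "[:-c, 1:]"])
  have vF: "v (G * L) = v G + v L" using mult[OF Gnz Lnz] .
  have hs: "hasse (Suc j) (G * L) = hasse (Suc j) G * L + hasse j G" for j
    unfolding L_def by (rule hasse_lin)
  have U: "LB (v (G * L) - nmul j D) (hasse j (G * L))" for j
  proof (cases j)
    case 0 then show ?thesis by (simp add: LB_def)
  next
    case (Suc j')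
    have 1: "LB (v (G * L) - nmul j D) (hasse (Suc j') G * L)"
      using LB_mult[OF conjunct1[OF IH, rule_format, of "Suc j'"] Lnz] Suc vF
      by (simp add: algebra_simps)
    have "LB (v G - nmul j' D) (hasse j' G)" using IH by blast
    moreover have "v (G * L) - nmul j D \<le> v G - nmul j' D"
      using LD vF Suc by (simp add: nmul_Suc algebra_simps)
    ultimately have 2: "LB (v (G * L) - nmul j D) (hasse j' G)" by (rule LB_mono)
    show ?thesis using LB_add[OF 1 2] Suc hs by simp
  qed
  show ?case
  proof (cases "v L = D")
    case True
    have kk: "length (filter (\<lambda>b. v [:-b, 1:] = D) (c # rs)) = Suc m"
      using True by (simp add: m_def L_def)
    have e1: "SLB (v (G * L) - nmul (Suc m) D) (hasse (Suc m) G * L)"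
      using SLB_mult[OF conjunct2[OF conjunct2[OF conjunct2[OF IH]], rule_format, of "Suc m"] Lnz] vF
      by (simp add: algebra_simps)
    have idm: "v (G * L) - nmul (Suc i) D = v G - nmul i D" for i using vF True by (simp add: nmul_Suc)
    have e2: "hasse m G \<noteq> 0" "v (hasse m G) = v (G * L) - nmul (Suc m) D"
      using IH idm[of m] by simp_all
    have E: "hasse (Suc m) (G * L) \<noteq> 0 \<and> v (hasse (Suc m) (G * L)) = v (G * L) - nmul (Suc m) D"
    proof -
      have "hasse (Suc m) (G * L) = hasse m G + hasse (Suc m) G * L" using hs[of m] by (simp add: add.commute)
      moreover have "SLB (v (hasse m G)) (hasse (Suc m) G * L)" using e1 e2(2) by simp
      ultimately show ?thesis using exact_SLB[OF e2(1)] e2(2) by simp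
    qed
    have S: "SLB (v (G * L) - nmul j D) (hasse j (G * L))" if "Suc m < j" for j
    proof -
      obtain j' where j': "j = Suc j'" "m < j'" using \<open>Suc m < j\<close> by (cases j) auto
      have 1: "SLB (v (G * L) - nmul j D) (hasse (Suc j') G * L)"
        using SLB_mult[OF conjunct2[OF conjunct2[OF conjunct2[OF IH]], rule_format, of "Suc j'"] Lnz] j' vF
        by (simp add: algebra_simps)
      have 2: "SLB (v (G * L) - nmul j D) (hasse j' G)"
        using IH j' idm[of j'] by simp
      show ?thesis using SLB_add[OF 1 2] j' hs by simp
    qed
    show ?thesis unfolding F' kk using U E S by blast
  next
    case False
    then have LD': "v L < D" using LD by simp
    have kk: "length (filter (\<lambda>b. v [:-b, 1:] = D) (c # rs)) = m"
      using False by (simp add: m_def L_def)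
    have E: "hasse m (G * L) \<noteq> 0 \<and> v (hasse m (G * L)) = v (G * L) - nmul m D"
    proof (cases m)
      case 0 then show ?thesis using Gnz Lnz vF by simp
    next
      case (Suc m')
      have e1: "hasse m G * L \<noteq> 0" "v (hasse m G * L) = v (G * L) - nmul m D"
      proof -
        have "hasse m G \<noteq> 0" "v (hasse m G) = v G - nmul m D" using IH by auto
        then show "hasse m G * L \<noteq> 0" "v (hasse m G * L) = v (G * L) - nmul m D"
          using Lnz vF mult[of "hasse m G" L] by (simp_all add: diff_add_eq add.commute)
      qed
      have "LB (v G - nmul m' D) (hasse m' G)" using IH by blast
      moreover have "v (G * L) - nmul m D < v G - nmul m' D"
        using LD' vF Suc by (simp add: nmul_Suc algebra_simps)
      ultimately have e2: "SLB (v (hasse m G * L)) (hasse m' G)" using e1(2) LB_SLB by simp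
      show ?thesis using exact_SLB[OF e1(1) e2] e1(2) hs[of m'] Suc by simp
    qed
    have S: "SLB (v (G * L) - nmul j D) (hasse j (G * L))" if "m < j" for j
    proof -
      obtain j' where j': "j = Suc j'" "m \<le> j'" using \<open>m < j\<close> by (cases j) auto
      have 1: "SLB (v (G * L) - nmul j D) (hasse (Suc j') G * L)"
        using SLB_mult[OF conjunct2[OF conjunct2[OF conjunct2[OF IH]], rule_format, of "Suc j'"] Lnz] j' vF
        by (simp add: algebra_simps)
      have "LB (v G - nmul j' D) (hasse j' G)" using IH by blast
      moreover have "v (G * L) - nmul j D < v G - nmul j' D"
        using LD' vF j' by (simp add: nmul_Suc algebra_simps)
      ultimately have 2: "SLB (v (G * L) - nmul j D) (hasse j' G)" using LB_SLB by blast
      show ?thesis using SLB_add[OF 1 2] j' hs by simp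
    qed
    show ?thesis unfolding F' kk using U E S by blast
  qed
qed

end




lemma ext_frac_cong:
  assumes "\<And>f. f \<noteq> 0 \<Longrightarrow> w1 f = w2 f"
  shows "ext_frac w1 q = ext_frac w2 q"
proof (cases "q = 0")
  case False
  define fd where "fd = (SOME (f, d). d \<noteq> 0 \<and> q = Fract f d)"
  obtain a b where ab: "q = Fract a b" "b \<noteq> 0" by (cases q)
  have "\<exists>p. (\<lambda>(f, d). d \<noteq> 0 \<and> q = Fract f d) p" using ab by auto
  then have sp: "(\<lambda>(f, d). d \<noteq> 0 \<and> q = Fract f d) fd" unfolding fd_def by (rule someI_ex)
  obtain f d where fd: "fd = (f, d)" by (cases fd)
  have d: "d \<noteq> 0" "q = Fract f d" using sp fd by auto
  have "f \<noteq> 0" using d False by (auto simp: fract_collapse)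
  then show ?thesis using False d assms unfolding ext_frac_def fd_def[symmetric] fd by simp
qed (simp add: ext_frac_def)

locale emb_hom =
  fixes emb :: "'k::field \<Rightarrow> 'c::field"
  assumes cl: "is_alg_closure emb"
begin

lemma e0[simp]: "emb 0 = 0" and e1[simp]: "emb 1 = 1" and eadd[simp]: "emb (x + y) = emb x + emb y"
  and emul[simp]: "emb (x * y) = emb x * emb y" and einj: "inj emb"
  using cl unfolding is_alg_closure_def by auto

lemma eq0[simp]: "emb x = 0 \<longleftrightarrow> x = 0"
  using einj e0 by (metis injD)

lemma esum: "emb (sum g S) = sum (\<lambda>i. emb (g i)) S"
  by (induction S rule: infinite_finite_induct) auto

abbreviation M :: "'k poly \<Rightarrow> 'c poly" where "M \<equiv> map_poly emb"

lemma coeff_M[simp]: "coeff (M p) i = emb (coeff p i)"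
  by (simp add: coeff_map_poly)

lemma M_add: "M (p + q) = M p + M q" by (simp add: poly_eq_iff)
lemma M_mult: "M (p * q) = M p * M q" by (simp add: poly_eq_iff coeff_mult esum)
lemma M_power: "M (p ^ i) = M p ^ i" by (induction i) (auto simp: M_mult)
lemma M_sum: "M (sum g S) = sum (\<lambda>i. M (g i)) S"
  by (induction S rule: infinite_finite_induct) (auto simp: M_add)
lemma M_eq0[simp]: "M p = 0 \<longleftrightarrow> p = 0" by (simp add: poly_eq_iff)
lemma degree_M[simp]: "degree (M p) = degree p" by (rule degree_map_poly) simp
lemma lc_M: "lead_coeff (M p) = emb (lead_coeff p)" by simp

lemma alg_closed: "degree (p :: 'c poly) > 0 \<Longrightarrow> \<exists>z. poly p z = 0"
  using cl unfolding is_alg_closure_def by blast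

lemma split: "(p :: 'c poly) \<noteq> 0 \<Longrightarrow> \<exists>rs. p = smult (lead_coeff p) (prod_list (map (\<lambda>b. [:-b, 1:]) rs)) \<and> length rs = degree p"
proof (induction "degree p" arbitrary: p)
  case 0
  then show ?case by (intro exI[of _ "[]"]) (auto elim: degree_eq_zeroE)
next
  case (Suc m)
  obtain z where z: "poly p z = 0" using alg_closed[of p] Suc by auto
  then obtain q where q: "p = [:-z, 1:] * q" using poly_eq_0_iff_dvd by (metis dvdE)
  have qnz: "q \<noteq> 0" using q Suc by auto
  have "degree p = degree [:-z, 1:] + degree q" unfolding q by (rule degree_mult_eq) (use qnz in auto)
  then have dq: "degree q = m" using Suc(2) by simp
  have "lead_coeff p = lead_coeff [:-z, 1:] * lead_coeff q" unfolding q by (rule lead_coeff_mult)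
  then have lq: "lead_coeff q = lead_coeff p" by simp
  obtain rs where rs: "q = smult (lead_coeff q) (prod_list (map (\<lambda>b. [:-b, 1:]) rs))" "length rs = degree q"
    using Suc(1)[of q] dq qnz by auto
  show ?case
  proof (intro exI[of _ "z # rs"] conjI)
    have q2: "q = smult (lead_coeff p) (prod_list (map (\<lambda>b. [:-b, 1:]) rs))"
      using rs(1) unfolding lq .
    have "p = smult (lead_coeff p) ([:-z, 1:] * prod_list (map (\<lambda>b. [:-b, 1:]) rs))"
      unfolding mult_smult_right[symmetric] q2[symmetric] by (rule q)
    then show "p = smult (lead_coeff p) (prod_list (map (\<lambda>b. [:-b, 1:]) (z # rs)))"
      by (simp only: list.map prod_list.Cons)
    show "length (z # rs) = degree p" using rs(2) dq Suc(2) by simp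
  qed
qed

lemma root_in: "(lc :: 'c) \<noteq> 0 \<Longrightarrow> poly (smult lc (prod_list (map (\<lambda>b. [:-b, 1:]) rs))) z = 0 \<Longrightarrow> z \<in> set rs"
proof -
  have "poly (prod_list (map (\<lambda>b. [:-b, 1:]) rs)) z = 0 \<Longrightarrow> z \<in> set rs"
  proof (induction rs)
    case (Cons a rs)
    have "poly (prod_list (map (\<lambda>b. [:-b, 1:]) (a # rs))) z = (z - a) * poly (prod_list (map (\<lambda>b. [:-b, 1:]) rs)) z"
      by (simp add: algebra_simps)
    then show ?case using Cons by auto
  qed simp
  then show "lc \<noteq> 0 \<Longrightarrow> poly (smult lc (prod_list (map (\<lambda>b. [:-b, 1:]) rs))) z = 0 \<Longrightarrow> z \<in> set rs" by simp
qed

end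

lemma qexp_expand:
  fixes Q f :: "'a::field poly"
  assumes "degree Q > 0"
  shows "f = (\<Sum>i\<le>degree f. qexp Q f i * Q ^ i)"
proof -
  have gen: "f = (\<Sum>i<N. qexp Q f i * Q ^ i) + (f div Q ^ N) * Q ^ N" for N
  proof (induction N)
    case (Suc N)
    define g where "g = f div Q ^ N"
    have e: "g = g div Q * Q + g mod Q" by (rule div_mult_mod_eq[symmetric])
    have d: "g div Q = f div Q ^ Suc N"
      unfolding g_def by (simp only: power_Suc2 poly_div_mult_right)
    have "g * Q ^ N = (g div Q * Q + g mod Q) * Q ^ N" using e by (rule arg_cong)
    also have "\<dots> = g mod Q * Q ^ N + g div Q * Q ^ Suc N" by (simp only: distrib_right power_Suc mult.assoc add.commute)
    finally have A: "g * Q ^ N = g mod Q * Q ^ N + g div Q * Q ^ Suc N" .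
    from A[unfolded d] have "(f div Q ^ N) * Q ^ N = qexp Q f N * Q ^ N + f div Q ^ Suc N * Q ^ Suc N"
      unfolding qexp_def g_def .
    then show ?case using Suc by (simp add: add.assoc)
  qed simp
  have "degree f < degree (Q ^ Suc (degree f))"
  proof -
    have "degree (Q ^ Suc (degree f)) = Suc (degree f) * degree Q" by (rule degree_power_eq) (use assms in auto)
    moreover have "Suc (degree f) * 1 \<le> Suc (degree f) * degree Q" using assms
      by (intro mult_le_mono2) simp
    then have "Suc (degree f) \<le> Suc (degree f) * degree Q" by simp
    ultimately show ?thesis by simp
  qed
  then have "f div Q ^ Suc (degree f) = 0" by (rule div_poly_less)
  then show ?thesis using gen[of "Suc (degree f)"] by (simp add: lessThan_Suc_atMost)
qed




lemma valuation_const: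
  assumes "valuation (\<mu> :: 'c::field poly \<Rightarrow> 'g::linordered_ab_group_add)"
  shows "valuation (\<lambda>c. \<mu> [:c:])"
proof -
  have m: "[:x * y:] = [:x:] * [:y:]" for x y :: 'c by simp
  have p: "[:x + y:] = [:x:] + [:y:]" for x y :: 'c by simp
  have A: "\<mu> (P * R) = \<mu> P + \<mu> R" if "P \<noteq> 0" "R \<noteq> 0" for P R
    using assms that unfolding valuation_def by blast
  have B: "min (\<mu> P) (\<mu> R) \<le> \<mu> (P + R)" if "P \<noteq> 0" "R \<noteq> 0" "P + R \<noteq> 0" for P R
    using assms that unfolding valuation_def by blast
  show ?thesis unfolding valuation_def
  proof (intro conjI allI impI)
    fix x y :: 'c assume "x \<noteq> 0" "y \<noteq> 0"
    then show "\<mu> [:x * y:] = \<mu> [:x:] + \<mu> [:y:]" unfolding m by (intro A) auto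
  next
    fix x y :: 'c assume "x \<noteq> 0" "y \<noteq> 0" "x + y \<noteq> 0"
    then show "min (\<mu> [:x:]) (\<mu> [:y:]) \<le> \<mu> [:x + y:]" unfolding p by (intro B) auto
  qed
qed

lemma root_of: "b \<in> set rs \<Longrightarrow> poly (prod_list (map (\<lambda>b. [:-b, 1:]) rs)) (b :: 'c::field) = 0"
  by (induction rs) auto

locale kps = emb_hom emb + nu: val \<nu> + mu: pval \<mu>
  for emb :: "'k::field \<Rightarrow> 'c::field" and \<nu> :: "'k poly \<Rightarrow> 'g::linordered_ab_group_add" and \<mu> :: "'c poly \<Rightarrow> 'g" +
  fixes Q :: "'k poly" and a :: 'c
  assumes extends: "\<forall>f. f \<noteq> 0 \<longrightarrow> \<mu> (M f) = \<nu> f" and key: "key_poly \<nu> Q"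
    and opt: "optimizing_root emb \<mu> Q a" and Qpos: "degree Q > 0"
begin

abbreviation \<gamma> where "\<gamma> \<equiv> \<mu> [:-a, 1:]"

sublocale cg: gauss "\<lambda>c. \<mu> [:c:]" \<gamma>
  by unfold_locales (rule valuation_const[OF mu.valv])

lemma ext: "f \<noteq> 0 \<Longrightarrow> \<mu> (M f) = \<nu> f" using extends by blast

lemma Qnz: "Q \<noteq> 0" using Qpos by auto
lemma Qmonic: "lead_coeff Q = 1" using key unfolding key_poly_def by blast

lemma Q_split: obtains rsQ where "M Q = smult 1 (prod_list (map (\<lambda>b. [:-b, 1:]) rsQ))" "a \<in> set rsQ"
   "\<forall>b\<in>set rsQ. \<mu> [:-b, 1:] \<le> \<gamma>"
proof -
  obtain rs where rs: "M Q = smult (lead_coeff (M Q)) (prod_list (map (\<lambda>b. [:-b, 1:]) rs))"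
    using split[of "M Q"] Qnz by auto
  have l: "lead_coeff (M Q) = 1" using Qmonic by simp
  have rs1: "M Q = smult 1 (prod_list (map (\<lambda>b. [:-b, 1:]) rs))" using rs unfolding l .
  have "a \<in> set rs" using opt rs1 root_in[of 1 rs a] unfolding optimizing_root_def by simp
  moreover have "\<forall>b\<in>set rs. \<mu> [:-b, 1:] \<le> \<gamma>"
  proof
    fix b assume "b \<in> set rs"
    then have "poly (M Q) b = 0" by (subst rs1) (simp add: root_of)
    then show "\<mu> [:-b, 1:] \<le> \<gamma>" using opt unfolding optimizing_root_def by blast
  qed
  ultimately show ?thesis using that rs1 by blast
qed

lemma small_roots:
  assumes f: "f \<noteq> 0" "degree f < degree Q"
    and rs: "M f = smult lc (prod_list (map (\<lambda>b. [:-b, 1:]) rs))" and lc: "lc \<noteq> 0"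
  shows "\<forall>b\<in>set rs. \<mu> [:-b, 1:] < \<gamma>"
proof (rule ccontr)
  assume "\<not> (\<forall>b\<in>set rs. \<mu> [:-b, 1:] < \<gamma>)"
  then obtain b0 where b0: "b0 \<in> set rs" "\<gamma> \<le> \<mu> [:-b0, 1:]" by force
  define D where "D = Max ((\<lambda>b. \<mu> [:-b, 1:]) ` set rs)"
  have Dge: "\<forall>b\<in>set rs. \<mu> [:-b, 1:] \<le> D" unfolding D_def by simp
  have gD: "\<gamma> \<le> D" using b0 Dge by (meson order_trans)
  have "D \<in> (\<lambda>b. \<mu> [:-b, 1:]) ` set rs" unfolding D_def by (rule Max_in) (use b0 in auto)
  then obtain bm where bm: "bm \<in> set rs" "\<mu> [:-bm, 1:] = D" by auto
  define k where "k = length (filter (\<lambda>b. \<mu> [:-b, 1:] = D) rs)"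
  have "bm \<in> set (filter (\<lambda>b. \<mu> [:-b, 1:] = D) rs)" using bm by simp
  then have k1: "1 \<le> k" unfolding k_def by (cases "filter (\<lambda>b. \<mu> [:-b, 1:] = D) rs") auto
  have "degree (M f) = length rs"
  proof -
    have "degree (prod_list (map (\<lambda>b. [:-b, 1:]) rs)) = length rs"
    proof (induction rs)
      case (Cons c rs)
      have nz: "prod_list (map (\<lambda>b. [:-b, 1:]) rs) \<noteq> (0 :: 'c poly)" by (auto simp: prod_list_zero_iff)
      have "degree ([:-c, 1:] * prod_list (map (\<lambda>b. [:-b, 1:]) rs)) = degree [:-c, 1:] + degree (prod_list (map (\<lambda>b. [:-b, 1:]) rs))"
        by (rule degree_mult_eq) (use nz in auto)
      then show ?case using Cons by simp
    qed simp
    then show ?thesis using rs lc by simp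
  qed
  then have kdeg: "k \<le> degree f" unfolding k_def using length_filter_le[of _ rs] by simp
  have HR: "hasse k (M f) \<noteq> 0 \<and> \<mu> (hasse k (M f)) = \<mu> (M f) - nmul k D"
    using mu.hasse_roots[OF lc Dge] unfolding rs[symmetric] k_def by blast
  have hm: "hasse k (M f) = M (hasse k f)" by (rule hasse_map) auto
  have hk: "hasse k f \<noteq> 0" using HR hm by simp
  have tf: "(nmul k D, k) \<in> eps_terms \<nu> f"
  proof -
    have "\<nu> f - \<nu> (hasse k f) = nmul k D"
      using HR hm ext[OF f(1)] ext[OF hk] by simp
    moreover have "(\<nu> f - \<nu> (hasse k f), k) \<in> eps_terms \<nu> f"
      unfolding eps_terms_def using k1 kdeg hk by blast
    ultimately show ?thesis by simp
  qed
  obtain rsQ where rsQ: "M Q = smult 1 (prod_list (map (\<lambda>b. [:-b, 1:]) rsQ))"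
    "a \<in> set rsQ" "\<forall>b\<in>set rsQ. \<mu> [:-b, 1:] \<le> \<gamma>" by (rule Q_split)
  have LBQ: "\<forall>j. mu.LB (\<mu> (M Q) - nmul j \<gamma>) (hasse j (M Q))"
    using mu.hasse_roots[OF one_neq_zero rsQ(3)] unfolding rsQ(1)[symmetric] by (rule conjunct1)
  have yb: "y \<le> nmul c \<gamma>" if "(y, c) \<in> eps_terms \<nu> Q" for y c
  proof -
    from that have y: "y = \<nu> Q - \<nu> (hasse c Q)" "hasse c Q \<noteq> 0" unfolding eps_terms_def by auto
    have hmQ: "hasse c (M Q) = M (hasse c Q)" by (rule hasse_map) auto
    have "mu.LB (\<mu> (M Q) - nmul c \<gamma>) (M (hasse c Q))" using LBQ[rule_format, of c] unfolding hmQ .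
    then have "\<mu> (M Q) - nmul c \<gamma> \<le> \<mu> (M (hasse c Q))" using y(2) unfolding mu.LB_def by simp
    then have "\<nu> Q - nmul c \<gamma> \<le> \<nu> (hasse c Q)" using ext[OF Qnz] ext[OF y(2)] by simp
    then have "\<nu> Q - \<nu> (hasse c Q) \<le> nmul c \<gamma>" by (simp add: diff_le_eq add.commute)
    then show ?thesis using y(1) by simp
  qed
  have "eps_ge \<nu> f Q"
    unfolding eps_ge_def
  proof (rule disjI2, rule bexI[OF _ tf], clarify)
    fix y c assume yc: "(y, c) \<in> eps_terms \<nu> Q"
    have "nmul k y \<le> nmul k (nmul c \<gamma>)" using yb[OF yc] by (rule nmul_mono)
    also have "\<dots> = nmul c (nmul k \<gamma>)" by (rule nmul_comm)
    also have "\<dots> \<le> nmul c (nmul k D)" using gD by (intro nmul_mono)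
    finally show "nmul k y \<le> nmul c (nmul k D)" .
  qed
  then have "degree Q \<le> degree f" using key f(1) unfolding key_poly_def by blast
  then show False using f(2) by simp
qed

end




context kps
begin

abbreviation sh :: "'c poly \<Rightarrow> 'c poly" where "sh F \<equiv> pcompose F [:a, 1:]"

lemma sh_lin[simp]: "sh [:-b, 1:] = [:a - b, 1:]" by (simp add: pcompose_pCons)

lemma sh_power: "sh (P ^ i) = sh P ^ i"
  by (induction i) (auto simp: pcompose_mult pcompose_1)

lemma lin_diff: "[:a - b, 1:] = [:-b, 1:] + - [:-a, 1:] + [:0, 1:]" by simp

lemma const_diff: "[:a - b:] = [:-b, 1:] + - [:-a, 1:]" by simp

lemma lin_VT:
  assumes "\<mu> [:-b, 1:] \<le> \<gamma>"
  shows "\<exists>t. cg.VT (sh [:-b, 1:]) (\<mu> [:-b, 1:]) t \<and> (\<mu> [:-b, 1:] < \<gamma> \<longrightarrow> t = 0) \<and> (b = a \<longrightarrow> t = 1)"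
proof (cases "\<mu> [:-b, 1:] < \<gamma>")
  case True
  have nz1: "[:-b, 1:] \<noteq> (0 :: 'c poly)" "- [:-a, 1:] \<noteq> (0 :: 'c poly)" by auto
  have "\<mu> [:-b, 1:] < \<mu> (- [:-a, 1:])" by (simp only: mu.uminus) (rule True)
  from mu.strict[OF nz1 this] have s: "[:a - b:] \<noteq> 0" "\<mu> [:a - b:] = \<mu> [:-b, 1:]"
    unfolding const_diff[symmetric] by auto
  have ab: "a - b \<noteq> 0" using s by simp
  have "cg.VT [:a - b, 1:] (\<mu> [:-b, 1:]) 0"
    unfolding cg.VT_def cg.cv_def
  proof (intro conjI allI impI)
    fix i assume "coeff [:a - b, 1:] i \<noteq> 0"
    then have "i = 0 \<or> i = 1" by (cases i) (auto simp: coeff_pCons split: nat.splits)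
    then show "\<mu> [:-b, 1:] \<le> \<mu> [:coeff [:a - b, 1:] i:] + nmul i \<gamma>"
      using s True by (auto simp: nmul_Suc)
  next
    fix i assume "coeff [:a - b, 1:] i \<noteq> 0" "0 < i"
    then have "i = 1" by (cases i) (auto simp: coeff_pCons split: nat.splits)
    then show "\<mu> [:-b, 1:] < \<mu> [:coeff [:a - b, 1:] i:] + nmul i \<gamma>"
      using True by simp
  qed (use ab s in auto)
  then show ?thesis using True ab by (intro exI[of _ 0]) auto
next
  case False
  then have eq: "\<mu> [:-b, 1:] = \<gamma>" using assms by simp
  have c0: "\<gamma> \<le> \<mu> [:a - b:]" if "a - b \<noteq> 0"
  proof -
    have nz1: "[:-b, 1:] \<noteq> (0 :: 'c poly)" "- [:-a, 1:] \<noteq> (0 :: 'c poly)" by auto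
    have "[:-b, 1:] + - [:-a, 1:] \<noteq> 0" using that const_diff by (metis pCons_eq_0_iff)
    from mu.addm[OF nz1 this] have "min \<gamma> (\<mu> (- [:-a, 1:])) \<le> \<mu> [:a - b:]" unfolding const_diff[symmetric] eq .
    then have "min \<gamma> \<gamma> \<le> \<mu> [:a - b:]" by (simp only: mu.uminus)
    then show ?thesis by simp
  qed
  have "cg.VT [:a - b, 1:] \<gamma> 1"
    unfolding cg.VT_def cg.cv_def
  proof (intro conjI allI impI)
    fix i assume "coeff [:a - b, 1:] i \<noteq> 0"
    then have "i = 0 \<or> i = 1" by (cases i) (auto simp: coeff_pCons split: nat.splits)
    then show "\<gamma> \<le> \<mu> [:coeff [:a - b, 1:] i:] + nmul i \<gamma>"
      using c0 \<open>coeff [:a - b, 1:] i \<noteq> 0\<close> by auto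
  next
    fix i assume "coeff [:a - b, 1:] i \<noteq> 0" "1 < i"
    then have False by (cases i) (auto simp: coeff_pCons split: nat.splits)
    then show "\<gamma> < \<mu> [:coeff [:a - b, 1:] i:] + nmul i \<gamma>" ..
  qed auto
  then show ?thesis using False eq by (intro exI[of _ 1]) simp
qed

lemma prod_VT:
  assumes "\<forall>b\<in>set rs. \<mu> [:-b, 1:] \<le> \<gamma>"
  shows "\<exists>t. cg.VT (sh (prod_list (map (\<lambda>b. [:-b, 1:]) rs))) (\<mu> (prod_list (map (\<lambda>b. [:-b, 1:]) rs))) t
     \<and> ((\<forall>b\<in>set rs. \<mu> [:-b, 1:] < \<gamma>) \<longrightarrow> t = 0) \<and> (a \<in> set rs \<longrightarrow> 1 \<le> t)"
  using assms
proof (induction rs)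
  case Nil
  have "cg.VT [:1:] (\<mu> [:1:]) 0" by (rule cg.VT_const) simp
  then show ?case by (intro exI[of _ 0]) (simp add: pcompose_1 one_pCons)
next
  case (Cons c rs)
  obtain t where t: "cg.VT (sh (prod_list (map (\<lambda>b. [:-b, 1:]) rs))) (\<mu> (prod_list (map (\<lambda>b. [:-b, 1:]) rs))) t"
     "(\<forall>b\<in>set rs. \<mu> [:-b, 1:] < \<gamma>) \<longrightarrow> t = 0" "a \<in> set rs \<longrightarrow> 1 \<le> t"
    using Cons by auto
  obtain u where u: "cg.VT (sh [:-c, 1:]) (\<mu> [:-c, 1:]) u" "\<mu> [:-c, 1:] < \<gamma> \<longrightarrow> u = 0" "c = a \<longrightarrow> u = 1"
    using lin_VT[of c] Cons.prems by auto
  have nz: "prod_list (map (\<lambda>b. [:-b, 1:]) rs) \<noteq> (0 :: 'c poly)" by (auto simp: prod_list_zero_iff)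
  have "cg.VT (sh [:-c, 1:] * sh (prod_list (map (\<lambda>b. [:-b, 1:]) rs)))
          (\<mu> [:-c, 1:] + \<mu> (prod_list (map (\<lambda>b. [:-b, 1:]) rs))) (u + t)"
    by (rule cg.VT_mult[OF u(1) t(1)])
  moreover have "\<mu> ([:-c, 1:] * prod_list (map (\<lambda>b. [:-b, 1:]) rs)) = \<mu> [:-c, 1:] + \<mu> (prod_list (map (\<lambda>b. [:-b, 1:]) rs))"
    using nz by (intro mu.mult) auto
  ultimately have "cg.VT (sh (prod_list (map (\<lambda>b. [:-b, 1:]) (c # rs)))) (\<mu> (prod_list (map (\<lambda>b. [:-b, 1:]) (c # rs)))) (u + t)"
    by (simp only: list.map prod_list.Cons pcompose_mult)
  moreover have "(\<forall>b\<in>set (c # rs). \<mu> [:-b, 1:] < \<gamma>) \<longrightarrow> u + t = 0" using t u by auto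
  moreover have "a \<in> set (c # rs) \<longrightarrow> 1 \<le> u + t" using t u by auto
  ultimately show ?case by blast
qed

lemma smult_VT:
  assumes "lc \<noteq> 0" "P \<noteq> 0" "cg.VT (sh P) (\<mu> P) t"
  shows "cg.VT (sh (smult lc P)) (\<mu> (smult lc P)) t"
proof -
  have "cg.VT ([:lc:] * sh P) (\<mu> [:lc:] + \<mu> P) (0 + t)"
    by (rule cg.VT_mult[OF cg.VT_const[OF assms(1)] assms(3)])
  moreover have "\<mu> (smult lc P) = \<mu> [:lc:] + \<mu> P"
    using mu.mult[of "[:lc:]" P] assms by simp
  moreover have "sh (smult lc P) = [:lc:] * sh P" by (simp add: pcompose_smult)
  ultimately show ?thesis by simp
qed

lemma small_VT:
  assumes "f \<noteq> 0" "degree f < degree Q"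
  shows "cg.VT (sh (M f)) (\<nu> f) 0"
proof -
  obtain rs where rs: "M f = smult (lead_coeff (M f)) (prod_list (map (\<lambda>b. [:-b, 1:]) rs))"
    using split[of "M f"] assms by auto
  have lc: "lead_coeff (M f) \<noteq> 0" using assms by simp
  have sm: "\<forall>b\<in>set rs. \<mu> [:-b, 1:] < \<gamma>" by (rule small_roots[OF assms rs lc])
  then obtain t where t: "cg.VT (sh (prod_list (map (\<lambda>b. [:-b, 1:]) rs))) (\<mu> (prod_list (map (\<lambda>b. [:-b, 1:]) rs))) t" "t = 0"
    using prod_VT[of rs] by (meson order_less_imp_le)
  have nz: "prod_list (map (\<lambda>b. [:-b, 1:]) rs) \<noteq> (0 :: 'c poly)" by (auto simp: prod_list_zero_iff)
  have "cg.VT (sh (M f)) (\<mu> (M f)) 0"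
    using smult_VT[OF lc nz t(1)] t(2) rs by simp
  then show ?thesis using ext[OF assms(1)] by simp
qed

lemma Q_VT: obtains tQ where "cg.VT (sh (M Q)) (\<nu> Q) tQ" "1 \<le> tQ"
proof -
  obtain rsQ where rsQ: "M Q = smult 1 (prod_list (map (\<lambda>b. [:-b, 1:]) rsQ))"
    "a \<in> set rsQ" "\<forall>b\<in>set rsQ. \<mu> [:-b, 1:] \<le> \<gamma>" by (rule Q_split)
  obtain t where t: "cg.VT (sh (prod_list (map (\<lambda>b. [:-b, 1:]) rsQ))) (\<mu> (prod_list (map (\<lambda>b. [:-b, 1:]) rsQ))) t" "1 \<le> t"
    using prod_VT[OF rsQ(3)] rsQ(2) by blast
  have "M Q = prod_list (map (\<lambda>b. [:-b, 1:]) rsQ)" using rsQ(1) by simp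
  then have "cg.VT (sh (M Q)) (\<nu> Q) t" using t(1) ext[OF Qnz] by simp
  then show ?thesis using that t(2) by blast
qed

lemma VT_trunc: assumes "cg.VT (sh F) w t" shows "trunc_lin \<mu> a F = w"
proof -
  have d: "degree (sh F) = degree F" by (simp add: degree_pcompose)
  show ?thesis using cg.VT_min[OF assms] unfolding trunc_lin_def cg.cv_def d .
qed

lemma main_eq:
  assumes f: "f \<noteq> 0"
  shows "trunc_lin \<mu> a (M f) = trunc_Q \<nu> Q f"
proof -
  obtain tQ where tQ: "cg.VT (sh (M Q)) (\<nu> Q) tQ" "1 \<le> tQ" by (rule Q_VT)
  define S where "S = {i. i \<le> degree f \<and> qexp Q f i \<noteq> 0}"
  define val where "val i = \<nu> (qexp Q f i * Q ^ i)" for i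
  have finS: "finite S" unfolding S_def by simp
  have fexp: "f = (\<Sum>i\<le>degree f. qexp Q f i * Q ^ i)" by (rule qexp_expand[OF Qpos])
  have fS: "f = (\<Sum>i\<in>S. qexp Q f i * Q ^ i)"
    unfolding S_def by (subst fexp) (rule sum.mono_neutral_right, auto)
  have Sne: "S \<noteq> {}" using fS f by auto
  have tr: "trunc_Q \<nu> Q f = Min (val ` S)"
    unfolding trunc_Q_def val_def S_def by (rule arg_cong[where f=Min]) auto
  define w where "w = Min (val ` S)"
  define I where "I = {i\<in>S. val i = w}"
  have "w \<in> val ` S" unfolding w_def using finS Sne by (intro Min_in) auto
  then have Ine: "I \<noteq> {}" unfolding I_def by auto
  have finI: "finite I" using finS unfolding I_def by simp
  define i0 where "i0 = Max I"
  have i0I: "i0 \<in> I" unfolding i0_def using finI Ine by (rule Max_in)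
  have i0S: "i0 \<in> S" using i0I unfolding I_def by simp
  have termVT: "cg.VT (sh (M (qexp Q f i * Q ^ i))) (val i) (i * tQ)" if "i \<in> S" for i
  proof -
    have nz: "qexp Q f i \<noteq> 0" using that S_def by simp
    have dg: "degree (qexp Q f i) < degree Q"
      unfolding qexp_def by (rule degree_mod_less') (use Qnz nz in \<open>auto simp: qexp_def\<close>)
    have pw: "cg.VT (sh (M Q ^ j)) (nmul j (\<nu> Q)) (j * tQ)" for j
    proof (induction j)
      case 0
      have "cg.VT [:1:] ((\<lambda>c. \<mu> [:c:]) 1) 0" by (rule cg.VT_const) simp
      then show ?case by (simp add: pcompose_1 one_pCons)
    next
      case (Suc j)
      have "cg.VT (sh (M Q) * sh (M Q ^ j)) (\<nu> Q + nmul j (\<nu> Q)) (tQ + j * tQ)"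
        by (rule cg.VT_mult[OF tQ(1) Suc])
      then show ?case by (simp add: pcompose_mult nmul_Suc)
    qed
    have "cg.VT (sh (M (qexp Q f i)) * sh (M Q ^ i)) (\<nu> (qexp Q f i) + nmul i (\<nu> Q)) (0 + i * tQ)"
      by (rule cg.VT_mult[OF small_VT[OF nz dg] pw])
    moreover have "val i = \<nu> (qexp Q f i) + nmul i (\<nu> Q)"
      unfolding val_def using nz Qnz by (simp add: nu.mult nu.power)
    ultimately show ?thesis by (simp add: M_mult M_power pcompose_mult)
  qed
  have shf: "sh (M f) = sh (M (qexp Q f i0 * Q ^ i0)) + (\<Sum>i\<in>S - {i0}. sh (M (qexp Q f i * Q ^ i)))"
  proof -
    have "sh (M f) = (\<Sum>i\<in>S. sh (M (qexp Q f i * Q ^ i)))"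
      by (subst fS) (simp add: M_sum pcompose_sum)
    also have "\<dots> = sh (M (qexp Q f i0 * Q ^ i0)) + (\<Sum>i\<in>S - {i0}. sh (M (qexp Q f i * Q ^ i)))"
      using finS i0S by (rule sum.remove)
    finally show ?thesis .
  qed
  have dom: "cg.domi w (i0 * tQ) (\<Sum>i\<in>S - {i0}. sh (M (qexp Q f i * Q ^ i)))"
  proof (rule cg.domi_sum)
    fix i assume i: "i \<in> S - {i0}"
    have wle: "w \<le> val i" unfolding w_def using finS i by simp
    have "w < val i \<or> (val i = w \<and> i * tQ < i0 * tQ)"
    proof (cases "val i = w")
      case True
      then have "i \<in> I" using i unfolding I_def by simp
      then have "i \<le> i0" unfolding i0_def using finI by simp
      then have "i < i0" using i by auto
      then show ?thesis using True tQ(2) by simp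
    qed (use wle in auto)
    then show "cg.domi w (i0 * tQ) (sh (M (qexp Q f i * Q ^ i)))"
      using termVT[of i] i by (intro cg.VT_domi) auto
  qed (simp add: finS)
  have "val i0 = w" using i0I unfolding I_def by simp
  then have "cg.VT (sh (M f)) w (i0 * tQ)"
    unfolding shf using cg.VT_add_domi[OF termVT[OF i0S] ] dom by simp
  then have "trunc_lin \<mu> a (M f) = w" by (rule VT_trunc)
  then show ?thesis using tr w_def by simp
qed

end



theorem corollary3p12:
  fixes emb :: "'k::field \<Rightarrow> 'c::field"
    and \<nu> :: "'k poly \<Rightarrow> 'g::linordered_ab_group_add"
    and \<mu> :: "'c poly \<Rightarrow> 'g"
    and Q h :: "'k poly" and a :: 'c and n e s :: nat
    and t :: "nat \<Rightarrow> 'k poly"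
  assumes closure: "is_alg_closure emb"
    and val_nu: "valuation \<nu>"
    and val_mu: "valuation \<mu>"
    and extends: "\<forall>f. f \<noteq> 0 \<longrightarrow> \<mu> (map_poly emb f) = \<nu> f"
    and key: "key_poly \<nu> Q" and degQ: "degree Q = n"
    and opt: "optimizing_root emb \<mu> Q a"
    and nuQ: "\<nu> Q \<in> vgroup_closure \<mu>"
    and e_pos: "0 < e" and e_in: "nmul e (\<nu> Q) \<in> vgroup_Ka emb \<mu> a"
    and e_least: "\<forall>e'. 0 < e' \<and> e' < e \<longrightarrow> nmul e' (\<nu> Q) \<notin> vgroup_Ka emb \<mu> a"
    and h_nz: "h \<noteq> 0" and deg_h: "degree h < n" and nu_h: "\<nu> h = nmul e (\<nu> Q)"
    and deg_t: "\<forall>i. t i \<noteq> 0 \<longrightarrow> degree (t i) < n * e"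
  shows "let r = Fract (Q ^ e) h;
             g = (\<Sum>i\<le>s. Fract (t i) 1 * r ^ i)
         in ext_frac (\<lambda>f. trunc_lin \<mu> a (map_poly emb f)) g = ext_frac (trunc_Q \<nu> Q) g \<and>
            (\<forall>P R :: 'k poly. poly (map_poly (\<lambda>c. Fract [:c:] 1) R) r \<noteq> 0 \<longrightarrow>
               (let u = poly (map_poly (\<lambda>c. Fract [:c:] 1) P) r / poly (map_poly (\<lambda>c. Fract [:c:] 1) R) r
                in ext_frac (\<lambda>f. trunc_lin \<mu> a (map_poly emb f)) u = ext_frac (trunc_Q \<nu> Q) u))"
proof -
  have n_pos: "0 < degree Q" using deg_h degQ by simp
  interpret kps emb \<nu> \<mu> Q a
    by unfold_locales (use closure val_nu val_mu extends key opt n_pos in auto)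
  have E: "ext_frac (\<lambda>f. trunc_lin \<mu> a (map_poly emb f)) q = ext_frac (trunc_Q \<nu> Q) q" for q
    by (rule ext_frac_cong) (rule main_eq)
  show ?thesis unfolding Let_def using E by simp
qed

end
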